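(* Let $\mathcal H$ be a real Hilbert space, $t_0>0$, let $f\in\mathcal C^2(\mathcal H)$ be convex with $S:=\operatorname{argmin}_{\mathcal H}f\neq\emptyset$, and let $e\in\mathcal C^1([t_0,+\infty[,\mathcal H)$ satisfy $\int_{t_0}^{+\infty}t\|e(t)\|dt<+\infty$ and $\int_{t_0}^{+\infty}t\|\dot e(t)\|dt<+\infty$. Let $\alpha>3$ and $\beta>0$. Then for any solution trajectory $x$ of $$\ddot x(t)+\frac{\alpha}{t}\dot x(t)+\beta\frac{d}{dt}\big(\nabla f(x(t))+e(t)\big)+\nabla f(x(t))+e(t)=0$$ the following hold: (i) $f(x(t))-\inf_{\mathcal H}f=o(1/t^2)$ as $t\to+\infty$; (ii) $\int_{t_0}^{+\infty}t^2\|\nabla f(x(t))\|^2dt<+\infty$; (iii) $\int_{t_0}^{+\infty}t\,(f(x(t))-\min_{\mathcal H}f)dt<+\infty$; (iv) for any $x^\star\in S$, $\int_{t_0}^{+\infty}t\langle\nabla f(x(t)),x(t)-x^\star\rangle dt<+\infty$; (v) $\int_{t_0}^{+\infty}t\|\dot x(t)\|^2dt<+\infty$; (vi) $\|\dot x(t)\|=o(1/t)$ as $t\to+\infty$. *)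

theory Defs
  imports "HOL-Analysis.Analysis"
begin

end

theory Submission
  imports Defs "HOL-Analysis.Analysis"
begin

lemma nonneg_bounded_integrable:
  fixes f :: "real \<Rightarrow> real"
  assumes cont: "continuous_on {T..} f" and nn: "\<And>t. t \<ge> T \<Longrightarrow> f t \<ge> 0"
    and bd: "\<And>t. t \<ge> T \<Longrightarrow> integral {T..t} f \<le> B"
  shows "f integrable_on {T..}"
proof -
  define g where "g = (\<lambda>(k::nat) s. if s \<in> {T..T + real k} then f s else 0)"
  have intk: "f integrable_on {T..T + real k}" for k
    by (rule integrable_continuous_real) (rule continuous_on_subset[OF cont], auto)
  have gint: "integral {T..} (g k) = integral {T..T + real k} f" for k
  proof -
    have "integral {T..} (g k) = integral ({T..T + real k} \<inter> {T..}) f"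
      unfolding g_def by (rule integral_restrict_Int)
    also have "{T..T + real k} \<inter> {T..} = {T..T + real k}" by auto
    finally show ?thesis .
  qed
  have "f integrable_on {T..} \<and> ((\<lambda>k. integral {T..} (g k)) \<longlonglongrightarrow> integral {T..} f)"
  proof (rule monotone_convergence_increasing)
    show "g k integrable_on {T..}" for k
    proof -
      have "f integrable_on ({T..T + real k} \<inter> {T..})"
        using intk[of k] by (simp add: Int_absorb1 ivl_subset)
      then show ?thesis unfolding g_def using integrable_restrict_Int by blast
    qed
    show "g k x \<le> g (Suc k) x" if "x \<in> {T..}" for k x
      using that nn[of x] by (auto simp: g_def)
    show "(\<lambda>k. g k x) \<longlonglongrightarrow> f x" if "x \<in> {T..}" for x
    proof -
      obtain k0 :: nat where "x - T \<le> real k0" using real_arch_simple by blast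
      then have "\<forall>k\<ge>k0. g k x = f x" using that by (auto simp: g_def)
      then show ?thesis by (intro tendsto_eventually) (auto simp: eventually_sequentially)
    qed
    show "bounded (range (\<lambda>k. integral {T..} (g k)))"
    proof -
      have "\<bar>integral {T..} (g k)\<bar> \<le> \<bar>B\<bar>" for k
      proof -
        have "0 \<le> integral {T..T + real k} f"
          by (rule integral_nonneg[OF intk]) (auto intro: nn)
        moreover have "integral {T..T + real k} f \<le> B" by (rule bd) simp
        ultimately show ?thesis using gint[of k] by linarith
      qed
      then show ?thesis by (auto simp: bounded_iff)
    qed
  qed
  then show ?thesis by blast
qed

lemma sq_bound:
  fixes y K A :: real
  assumes "y \<ge> 0" "K \<ge> 0" "A \<ge> 0" "y\<^sup>2 \<le> K + A * y"
  shows "y \<le> A + sqrt K"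
proof (rule ccontr)
  assume "\<not> ?thesis"
  then have y: "y > A + sqrt K" by simp
  have "y * (y - A) > (A + sqrt K) * sqrt K"
    using y assms by (intro mult_strict_mono') (auto)
  moreover have "(A + sqrt K) * sqrt K \<ge> K" using assms
    by (simp add: distrib_right)
  ultimately show False using assms(4) by (simp add: power2_eq_square algebra_simps)
qed

lemma energy_lemma:
  fixes E E' P g h :: "real \<Rightarrow> real"
  assumes deriv: "\<And>t. t \<ge> T \<Longrightarrow> (E has_vector_derivative E' t) (at t within {T..})"
    and Enn: "\<And>t. t \<ge> T \<Longrightarrow> E t \<ge> 0"
    and Pc: "continuous_on {T..} P" and Pnn: "\<And>t. t \<ge> T \<Longrightarrow> P t \<ge> 0"
    and gc: "continuous_on {T..} g" and gnn: "\<And>t. t \<ge> T \<Longrightarrow> g t \<ge> 0"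
    and gi: "g integrable_on {T..}"
    and hc: "continuous_on {T..} h" and hnn: "\<And>t. t \<ge> T \<Longrightarrow> h t \<ge> 0"
    and hi: "h integrable_on {T..}"
    and ineq: "\<And>t. t \<ge> T \<Longrightarrow> E' t + P t \<le> g t + h t * sqrt (E t)"
  shows "(\<exists>M. \<forall>t\<ge>T. E t \<le> M) \<and> (\<exists>B. \<forall>t\<ge>T. integral {T..t} P \<le> B)"
proof -
  have Ec: "continuous_on {T..} E"
    unfolding continuous_on_eq_continuous_within
    using deriv has_vector_derivative_continuous by fastforce
  define Gi where "Gi = integral {T..} g"
  define Hi where "Hi = integral {T..} h"
  define K where "K = E T + Gi"
  have Gi0: "Gi \<ge> 0" unfolding Gi_def by (rule integral_nonneg[OF gi]) (auto intro: gnn)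
  have Hi0: "Hi \<ge> 0" unfolding Hi_def by (rule integral_nonneg[OF hi]) (auto intro: hnn)
  have K0: "K \<ge> 0" unfolding K_def using Gi0 Enn[of T] by simp
  have hsc: "continuous_on {T..} (\<lambda>s. h s * sqrt (E s))"
    by (intro continuous_intros hc Ec)
  have sub: "{T..t} \<subseteq> {T..}" for t by auto
  have key: "E t + integral {T..t} P \<le> K + integral {T..t} (\<lambda>s. h s * sqrt (E s))"
    if t: "t \<ge> T" for t
  proof -
    have "(E' has_integral (E t - E T)) {T..t}"
      by (rule fundamental_theorem_of_calculus[OF t])
         (auto intro: has_vector_derivative_within_subset[OF deriv])
    then have E'i: "E' integrable_on {T..t}" and E'v: "integral {T..t} E' = E t - E T"
      by (auto simp: integrable_on_def integral_unique)
    have Pi: "P integrable_on {T..t}" by (rule integrable_continuous_real, rule continuous_on_subset[OF Pc sub])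
    have gi': "g integrable_on {T..t}" by (rule integrable_continuous_real, rule continuous_on_subset[OF gc sub])
    have hsi: "(\<lambda>s. h s * sqrt (E s)) integrable_on {T..t}"
      by (rule integrable_continuous_real, rule continuous_on_subset[OF hsc sub])
    have "integral {T..t} (\<lambda>s. E' s + P s) \<le> integral {T..t} (\<lambda>s. g s + h s * sqrt (E s))"
      by (rule integral_le) (auto intro!: integrable_add E'i Pi gi' hsi ineq)
    then have "integral {T..t} E' + integral {T..t} P \<le> integral {T..t} g + integral {T..t} (\<lambda>s. h s * sqrt (E s))"
      by (simp add: integral_add E'i Pi gi' hsi)
    moreover have "integral {T..t} g \<le> Gi"
      unfolding Gi_def by (rule integral_subset_le[OF sub gi' gi]) (auto intro: gnn)
    ultimately show ?thesis using E'v unfolding K_def by linarith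
  qed
  have Pnn_int: "integral {T..t} P \<ge> 0" if "t \<ge> T" for t
    by (rule integral_nonneg) (auto intro!: integrable_continuous_real continuous_on_subset[OF Pc] Pnn)
  have hsqle: "integral {T..t} (\<lambda>s. h s * sqrt (E s)) \<le> Hi * sqrt Mx"
    if "t \<ge> T" "\<And>s. s \<in> {T..t} \<Longrightarrow> E s \<le> Mx" for t Mx
  proof -
    have hi': "h integrable_on {T..t}" by (rule integrable_continuous_real, rule continuous_on_subset[OF hc sub])
    have Mx0: "Mx \<ge> 0" using that(2)[of T] that(1) Enn[of T] by auto
    have "integral {T..t} (\<lambda>s. h s * sqrt (E s)) \<le> integral {T..t} (\<lambda>s. h s * sqrt Mx)"
      by (rule integral_le)
         (auto intro!: integrable_continuous_real continuous_on_subset[OF hsc] continuous_on_subset[OF hc] continuous_intros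
               mult_left_mono hnn that(2) Mx0)
    also have "\<dots> = integral {T..t} h * sqrt Mx" by simp
    also have "\<dots> \<le> Hi * sqrt Mx"
      unfolding Hi_def
      by (intro mult_right_mono integral_subset_le[OF sub hi' hi]) (auto intro: hnn Mx0)
    finally show ?thesis .
  qed
  define M where "M = (Hi + sqrt K)\<^sup>2"
  have bound: "E t \<le> M" if t: "t \<ge> T" for t
  proof -
    obtain s where s: "s \<in> {T..t}" and smax: "\<And>y. y \<in> {T..t} \<Longrightarrow> E y \<le> E s"
      using continuous_attains_sup[of "{T..t}" E] continuous_on_subset[OF Ec sub[of t]] t by auto
    have "E s \<le> K + Hi * sqrt (E s)"
      using key[of s] Pnn_int[of s] hsqle[of s "E s"] s smax by auto
    then have "sqrt (E s) \<le> Hi + sqrt K"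
      using Enn[of s] s by (intro sq_bound Hi0 K0) auto
    then have "E s \<le> M" unfolding M_def
      by (metis Enn atLeastAtMost_iff power_mono real_sqrt_ge_zero real_sqrt_pow2 s)
    then show ?thesis using smax[of t] t by auto
  qed
  have "integral {T..t} P \<le> K + Hi * sqrt M" if "t \<ge> T" for t
    using key[OF that] hsqle[OF that, of M] bound Enn[OF that] by force
  then show ?thesis using bound by blast
qed

lemma ln_integral:
  fixes S t :: real
  assumes "0 < S" "S \<le> t"
  shows "((\<lambda>s. 1 / s) has_integral (ln t - ln S)) {S..t}"
proof -
  have "(ln has_vector_derivative (1 / x)) (at x within {S..t})" if "x \<in> {S..t}" for x
  proof -
    have "(ln has_real_derivative inverse x) (at x)" using that assms by (intro DERIV_ln) auto
    then show ?thesis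
      by (simp add: has_real_derivative_iff_has_vector_derivative divide_inverse has_vector_derivative_at_within)
  qed
  then show ?thesis by (intro fundamental_theorem_of_calculus assms)
qed

lemma vanish_lemma:
  fixes W k :: "real \<Rightarrow> real"
  assumes T0: "T > 0"
    and Wle: "\<And>s t. T \<le> s \<Longrightarrow> s \<le> t \<Longrightarrow> W t \<le> W s + integral {s..t} k"
    and kc: "continuous_on {T..} k" and knn: "\<And>t. t \<ge> T \<Longrightarrow> k t \<ge> 0"
    and ki: "k integrable_on {T..}"
    and Wnn: "\<And>t. t \<ge> T \<Longrightarrow> W t \<ge> 0"
    and Wc: "continuous_on {T..} W"
    and Wi: "(\<lambda>s. W s / s) integrable_on {T..}"
    and eps: "\<epsilon> > 0"
  shows "eventually (\<lambda>t. W t < \<epsilon>) at_top"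
proof -
  define Kf where "Kf t = integral {T..t} k" for t
  define Ks where "Ks = (SUP t\<in>{T..}. Kf t)"
  have sub: "{a..b} \<subseteq> {T..}" if "a \<ge> T" for a b using that by auto
  have kint: "k integrable_on {a..b}" if "a \<ge> T" for a b
    by (rule integrable_continuous_real, rule continuous_on_subset[OF kc sub[OF that]])
  have bdd: "bdd_above (Kf ` {T..})"
  proof (rule bdd_aboveI2)
    fix t assume "t \<in> {T..}"
    then show "Kf t \<le> integral {T..} k"
      unfolding Kf_def by (intro integral_subset_le kint ki) (auto intro: knn)
  qed
  have "\<exists>x\<in>{T..}. Ks - \<epsilon>/2 < Kf x"
  proof -
    have ne: "{T..} \<noteq> {}" by auto
    have "Ks - \<epsilon>/2 < (SUP t\<in>{T..}. Kf t)" using eps unfolding Ks_def by simp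
    then show ?thesis using less_cSUP_iff[OF ne bdd] by blast
  qed
  then obtain S where S: "S \<ge> T" and KS: "Ks - \<epsilon>/2 < Kf S" by auto
  have tail: "integral {s..t} k < \<epsilon>/2" if "S \<le> s" "s \<le> t" for s t
  proof -
    have "integral {T..s} k + integral {s..t} k = integral {T..t} k"
      using that S by (intro Henstock_Kurzweil_Integration.integral_combine[OF _ _ kint[of T t]]) auto
    then have "Kf t = Kf s + integral {s..t} k" unfolding Kf_def by simp
    moreover have "integral {T..S} k + integral {S..s} k = integral {T..s} k"
      using that S by (intro Henstock_Kurzweil_Integration.integral_combine[OF _ _ kint[of T s]]) auto
    then have "Kf s = Kf S + integral {S..s} k" unfolding Kf_def by simp
    moreover have "integral {S..s} k \<ge> 0" using S that by (intro integral_nonneg kint) (auto intro: knn)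
    moreover have "Kf t \<le> Ks" unfolding Ks_def using that S by (intro cSUP_upper bdd) auto
    ultimately show ?thesis using KS by linarith
  qed
  define B where "B = integral {T..} (\<lambda>s. W s / s)"
  have S0: "S > 0" using S T0 by simp
  have Wsc: "continuous_on {T..} (\<lambda>s. W s / s)"
    using T0 by (intro continuous_intros Wc) auto
  have Bb: "integral {S..t} (\<lambda>s. W s / s) \<le> B" for t
    unfolding B_def using S T0
    by (intro integral_subset_le Wi integrable_continuous_real continuous_on_subset[OF Wsc])
       (auto intro!: divide_nonneg_pos Wnn)
  have "eventually (\<lambda>t. t > S * exp (2 * B / \<epsilon>)) at_top" by (rule eventually_gt_at_top)
  then show ?thesis
  proof (rule eventually_mono)
    fix t assume t: "t > S * exp (2 * B / \<epsilon>)"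
    have St: "S < t"
    proof -
      have "B \<ge> 0" unfolding B_def using T0
        by (intro integral_nonneg Wi) (auto intro!: divide_nonneg_pos Wnn)
      then have "exp (2 * B / \<epsilon>) \<ge> 1" using eps by simp
      then have "S * exp (2 * B / \<epsilon>) \<ge> S" using S0 by simp
      then show ?thesis using t by simp
    qed
    show "W t < \<epsilon>"
    proof (rule ccontr)
      assume "\<not> W t < \<epsilon>"
      then have Wt: "W t \<ge> \<epsilon>" by simp
      have li: "((\<lambda>s. 1 / s) has_integral (ln t - ln S)) {S..t}" using ln_integral[OF S0, of t] St by simp
      have lint: "(\<lambda>s. 1 / s) integrable_on {S..t}" using li by (auto simp: integrable_on_def)
      have "integral {S..t} (\<lambda>s. (\<epsilon>/2) * (1 / s)) \<le> integral {S..t} (\<lambda>s. W s / s)"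
      proof (rule integral_le)
        show "(\<lambda>s. \<epsilon> / 2 * (1 / s)) integrable_on {S..t}"
          using integrable_cmul[OF lint, of "\<epsilon>/2"] by simp
        show "(\<lambda>s. W s / s) integrable_on {S..t}"
          using S by (intro integrable_continuous_real continuous_on_subset[OF Wsc]) auto
        fix s assume s: "s \<in> {S..t}"
        have "W t \<le> W s + integral {s..t} k" using s S by (intro Wle) auto
        then have "W s \<ge> \<epsilon>/2" using tail[of s t] s Wt by auto
        moreover have "s > 0" using s S0 by auto
        ultimately have "(\<epsilon>/2) / s \<le> W s / s" by (intro divide_right_mono) auto
        then show "\<epsilon> / 2 * (1 / s) \<le> W s / s" by simp
      qed
      moreover have "integral {S..t} (\<lambda>s. (\<epsilon>/2) * (1 / s)) = (\<epsilon>/2) * (ln t - ln S)"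
        using integral_unique[OF has_integral_cmul[OF li, of "\<epsilon>/2"]] by simp
      ultimately have "(\<epsilon>/2) * (ln t - ln S) \<le> B" using Bb[of t] by linarith
      moreover have "ln t > ln S + 2 * B / \<epsilon>"
      proof -
        have "ln t > ln (S * exp (2 * B / \<epsilon>))" using t S0 St by (intro ln_less_cancel_iff[THEN iffD2]) auto
        then show ?thesis using S0 by (simp add: ln_mult)
      qed
      ultimately show False using eps by (simp add: field_simps)
    qed
  qed
qed

lemma tangent_ineq:
  fixes f :: "'a::real_inner \<Rightarrow> real" and gf :: "'a \<Rightarrow> 'a"
  assumes f_grad: "\<And>y. (f has_derivative (\<lambda>h. gf y \<bullet> h)) (at y)"
    and cvx: "convex_on UNIV f"
  shows "f y \<ge> f z + gf z \<bullet> (y - z)"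
proof -
  define g where "g \<tau> = f (z + \<tau> *\<^sub>R (y - z))" for \<tau> :: real
  have gc: "convex_on UNIV g"
  proof (rule convex_onI)
    fix t a b :: real assume t: "0 < t" "t < 1"
    have "z + ((1 - t) *\<^sub>R a + t *\<^sub>R b) *\<^sub>R (y - z)
        = (1 - t) *\<^sub>R (z + a *\<^sub>R (y - z)) + t *\<^sub>R (z + b *\<^sub>R (y - z))"
      by (simp add: algebra_simps)
    then show "g ((1 - t) *\<^sub>R a + t *\<^sub>R b) \<le> (1 - t) * g a + t * g b"
      unfolding g_def using convex_onD[OF cvx, of t] t by auto
  qed simp
  have "((\<lambda>\<tau>. z + \<tau> *\<^sub>R (y - z)) has_derivative (\<lambda>h. h *\<^sub>R (y - z))) (at 0)"
    by (auto intro!: derivative_eq_intros)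
  moreover have "(f has_derivative (\<lambda>h. gf z \<bullet> h)) (at ((\<lambda>\<tau>. z + \<tau> *\<^sub>R (y - z)) 0))"
    using f_grad[of z] by simp
  ultimately have ch: "((f \<circ> (\<lambda>\<tau>. z + \<tau> *\<^sub>R (y - z))) has_derivative ((\<lambda>h. gf z \<bullet> h) \<circ> (\<lambda>h. h *\<^sub>R (y - z)))) (at 0)"
    by (rule diff_chain_at)
  have geq: "g = f \<circ> (\<lambda>\<tau>. z + \<tau> *\<^sub>R (y - z))" by (auto simp: g_def fun_eq_iff)
  have "(g has_field_derivative (gf z \<bullet> (y - z))) (at 0 within UNIV)"
    unfolding has_field_derivative_def geq
    by (rule has_derivative_eq_rhs[OF ch]) (auto simp: fun_eq_iff)
  from convex_on_imp_above_tangent[OF gc _ _ _ this, of 1]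
  have "g 1 - g 0 \<ge> gf z \<bullet> (y - z) * (1 - 0)" by simp
  then show ?thesis by (simp add: g_def)
qed

lemma grad_monotone:
  fixes f :: "'a::real_inner \<Rightarrow> real" and gf :: "'a \<Rightarrow> 'a"
  assumes f_grad: "\<And>y. (f has_derivative (\<lambda>h. gf y \<bullet> h)) (at y)"
    and cvx: "convex_on UNIV f"
  shows "(gf y - gf z) \<bullet> (y - z) \<ge> 0"
proof -
  have "f y \<ge> f z + gf z \<bullet> (y - z)" "f z \<ge> f y + gf y \<bullet> (z - y)"
    using tangent_ineq[OF f_grad cvx] by auto
  then show ?thesis by (simp add: inner_diff_left inner_diff_right inner_commute)
qed

lemma vderiv_quotient:
  fixes f :: "real \<Rightarrow> 'a::real_normed_vector"
  assumes "(f has_vector_derivative D) (at x within S)"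
  shows "((\<lambda>y. (1 / (y - x)) *\<^sub>R (f y - f x)) \<longlongrightarrow> D) (at x within S)"
proof -
  have "((\<lambda>y. norm (f y - f x - (y - x) *\<^sub>R D) / norm (y - x)) \<longlongrightarrow> 0) (at x within S)"
    using assms unfolding has_vector_derivative_def has_derivative_iff_norm by simp
  moreover have "eventually (\<lambda>y. norm (f y - f x - (y - x) *\<^sub>R D) / norm (y - x)
      = norm ((1 / (y - x)) *\<^sub>R (f y - f x) - D)) (at x within S)"
  proof -
    have "eventually (\<lambda>y. y \<noteq> x) (at x within S)" by (simp add: eventually_at_filter)
    then show ?thesis
    proof (rule eventually_mono)
      fix y assume yx: "y \<noteq> x"
      have "(1 / (y - x)) *\<^sub>R (f y - f x) - D = (1 / (y - x)) *\<^sub>R (f y - f x - (y - x) *\<^sub>R D)"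
        using yx by (simp add: scaleR_right_diff_distrib)
      then show "norm (f y - f x - (y - x) *\<^sub>R D) / norm (y - x)
          = norm ((1 / (y - x)) *\<^sub>R (f y - f x) - D)"
        by (simp add: divide_inverse mult.commute)
    qed
  qed
  ultimately have "((\<lambda>y. norm ((1 / (y - x)) *\<^sub>R (f y - f x) - D)) \<longlongrightarrow> 0) (at x within S)"
    by (rule Lim_transform_eventually)
  then show ?thesis
    using tendsto_norm_zero_iff LIM_zero_iff by blast
qed

lemma deriv_monotone:
  fixes x :: "real \<Rightarrow> 'a::real_inner" and gf :: "'a \<Rightarrow> 'a"
  assumes dx: "(x has_vector_derivative x') (at t within S)"
    and dg: "((\<lambda>s. gf (x s)) has_vector_derivative d) (at t within S)"
    and nb: "at t within S \<noteq> bot"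
    and mono: "\<And>y z. (gf y - gf z) \<bullet> (y - z) \<ge> 0"
  shows "x' \<bullet> d \<ge> 0"
proof -
  have lim: "((\<lambda>y. ((1 / (y - t)) *\<^sub>R (x y - x t)) \<bullet> ((1 / (y - t)) *\<^sub>R (gf (x y) - gf (x t))))
      \<longlongrightarrow> x' \<bullet> d) (at t within S)"
    by (intro tendsto_inner vderiv_quotient dx dg)
  moreover have ge: "((1 / (y - t)) *\<^sub>R (x y - x t)) \<bullet> ((1 / (y - t)) *\<^sub>R (gf (x y) - gf (x t))) \<ge> 0" for y
  proof -
    have "((1 / (y - t)) *\<^sub>R (x y - x t)) \<bullet> ((1 / (y - t)) *\<^sub>R (gf (x y) - gf (x t)))
        = (1 / (y - t))\<^sup>2 * ((gf (x y) - gf (x t)) \<bullet> (x y - x t))"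
      by (simp add: power2_eq_square inner_commute)
    also have "\<dots> \<ge> 0" using mono by simp
    finally show ?thesis .
  qed
  show ?thesis
    by (rule tendsto_lowerbound[OF lim _ nb], rule always_eventually, rule allI, rule ge)
qed

lemma energy_alg:
  fixes P V g ee :: "'a::real_inner" and t lam \<alpha> \<beta> F :: real
  assumes t: "t > 0"
  defines "c \<equiv> \<beta> * (\<alpha> - lam)" and "\<xi> \<equiv> lam * (\<alpha> - 1 - lam)"
  defines "X \<equiv> V - \<beta> *\<^sub>R (g + ee)"
  defines "V' \<equiv> - (\<alpha> / t) *\<^sub>R X - (g + ee)"
  shows "t * (t - c) * (g \<bullet> X) + (2 * t - c) * F + (lam *\<^sub>R P + t *\<^sub>R V) \<bullet> (lam *\<^sub>R X + (t *\<^sub>R V' + V))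
          + \<xi> * (P \<bullet> X)
       = (2 * t - c) * F - lam * (t - \<beta>) * (P \<bullet> g) - lam * (t - \<beta>) * (P \<bullet> ee)
         + t * (lam + 1 - \<alpha>) * (V \<bullet> V) - t * (t - c) * \<beta> * (g \<bullet> g) - t * (t - c) * (V \<bullet> ee)
         - t * (t - c) * \<beta> * (g \<bullet> ee)"
proof -
  have tV': "t *\<^sub>R V' = - \<alpha> *\<^sub>R X - t *\<^sub>R (g + ee)"
    unfolding V'_def using t by (simp add: algebra_simps)
  show ?thesis
    unfolding tV' X_def c_def \<xi>_def
    by (simp add: inner_add_left inner_add_right inner_diff_left inner_diff_right inner_commute[of V P]
        inner_commute[of g P] inner_commute[of ee P] inner_commute[of g V] inner_commute[of ee V] inner_commute[of ee g]
        algebra_simps)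
qed

lemma vd_inner:
  fixes u v :: "real \<Rightarrow> 'a::real_inner"
  assumes "(u has_vector_derivative u') (at t within S)" "(v has_vector_derivative v') (at t within S)"
  shows "((\<lambda>s. u s \<bullet> v s) has_vector_derivative (u t \<bullet> v' + u' \<bullet> v t)) (at t within S)"
  by (rule bounded_bilinear.has_vector_derivative[OF bounded_bilinear_inner assms])

lemma restrict_int:
  fixes h :: "real \<Rightarrow> real"
  assumes "\<And>t. t \<ge> t0 \<Longrightarrow> h t \<ge> 0" "continuous_on {t0..} h" "h integrable_on {t0..}" "T \<ge> t0"
  shows "h integrable_on {T..}"
proof (rule nonneg_bounded_integrable)
  show "continuous_on {T..} h" using assms by (auto intro: continuous_on_subset)
  show "h t \<ge> 0" if "t \<ge> T" for t using assms that by auto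
  show "integral {T..t} h \<le> integral {t0..} h" if "t \<ge> T" for t
    using assms that
    by (intro integral_subset_le integrable_on_subinterval[OF assms(3)]) auto
qed

lemma dominated_int:
  fixes h P :: "real \<Rightarrow> real"
  assumes hc: "continuous_on {T..} h" and hnn: "\<And>t. t \<ge> T \<Longrightarrow> h t \<ge> 0"
    and le: "\<And>t. t \<ge> T \<Longrightarrow> h t \<le> K * P t" and K: "K \<ge> 0"
    and Pc: "continuous_on {T..} P" and Pb: "\<And>t. t \<ge> T \<Longrightarrow> integral {T..t} P \<le> B"
  shows "h integrable_on {T..}"
proof (rule nonneg_bounded_integrable[OF hc hnn])
  fix t assume t: "t \<ge> T"
  have sub: "{T..t} \<subseteq> {T..}" by auto
  have "integral {T..t} h \<le> integral {T..t} (\<lambda>s. K * P s)"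
    by (intro integral_le integrable_continuous_real continuous_on_subset[OF hc sub]
        continuous_on_subset[OF _ sub] continuous_intros Pc le) auto
  also have "\<dots> = K * integral {T..t} P" by simp
  also have "\<dots> \<le> K * B" using Pb[OF t] K by (intro mult_left_mono) auto
  finally show "integral {T..t} h \<le> K * B" .
qed

lemma ext_int:
  fixes h :: "real \<Rightarrow> 'b::banach"
  assumes "continuous_on {t0..} h" "h integrable_on {T..}" "T \<ge> t0"
  shows "h integrable_on {t0..}"
proof -
  have "h integrable_on ({t0..T} \<union> {T..})"
  proof (rule integrable_Un)
    have e: "{t0..T} \<inter> {T..} = {T}" using assms(3) by auto
    show "negligible ({t0..T} \<inter> {T..})" unfolding e by simp
    show "h integrable_on {t0..T}" using assms by (intro integrable_continuous_real) (auto intro: continuous_on_subset)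
  qed (rule assms(2))
  moreover have "{t0..T} \<union> {T..} = {t0..}" using assms(3) by auto
  ultimately show ?thesis by simp
qed

lemma norm_sq3:
  fixes a b c :: "'a::real_normed_vector"
  shows "(norm (a + b + c))\<^sup>2 \<le> 3 * ((norm a)\<^sup>2 + (norm b)\<^sup>2 + (norm c)\<^sup>2)"
proof -
  have "norm (a + b + c) \<le> norm a + norm b + norm c" by (meson norm_triangle_le order_refl add_mono)
  then have "(norm (a + b + c))\<^sup>2 \<le> (norm a + norm b + norm c)\<^sup>2" by (simp add: power_mono)
  also have "\<dots> \<le> 3 * ((norm a)\<^sup>2 + (norm b)\<^sup>2 + (norm c)\<^sup>2)"
  proof -
    have "0 \<le> (norm a - norm b)\<^sup>2 + (norm b - norm c)\<^sup>2 + (norm a - norm c)\<^sup>2" by simp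
    then show ?thesis by (simp add: power2_eq_square algebra_simps)
  qed
  finally show ?thesis .
qed

lemma FTC_le:
  fixes E E' k :: "real \<Rightarrow> real"
  assumes deriv: "\<And>t. t \<ge> T \<Longrightarrow> (E has_vector_derivative E' t) (at t within {T..})"
    and le: "\<And>t. t \<ge> T \<Longrightarrow> E' t \<le> k t" and kc: "continuous_on {T..} k"
    and st: "T \<le> s" "s \<le> t"
  shows "E t \<le> E s + integral {s..t} k"
proof -
  have "(E' has_integral (E t - E s)) {s..t}"
    by (rule fundamental_theorem_of_calculus[OF st(2)])
       (use st in \<open>auto intro: has_vector_derivative_within_subset[OF deriv]\<close>)
  then have "E t - E s = integral {s..t} E'" "E' integrable_on {s..t}"
    by (auto simp: integrable_on_def integral_unique)
  moreover have "integral {s..t} E' \<le> integral {s..t} k"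
    using st by (intro integral_le calculation(2) integrable_continuous_real continuous_on_subset[OF kc] le) auto
  ultimately show ?thesis by simp
qed

locale dyn =
  fixes f :: "'a::{real_inner, complete_space} \<Rightarrow> real"
    and gf :: "'a \<Rightarrow> 'a"
    and e e' :: "real \<Rightarrow> 'a"
    and x x' x'' w :: "real \<Rightarrow> 'a"
    and t0 \<alpha> \<beta> :: real
  assumes t0_pos: "t0 > 0"
    and f_grad: "\<And>y. (f has_derivative (\<lambda>h. gf y \<bullet> h)) (at y)"
    and f_convex: "convex_on UNIV f"
    and e_deriv: "\<And>t. t \<ge> t0 \<Longrightarrow> (e has_vector_derivative e' t) (at t within {t0..})"
    and e'_cont: "continuous_on {t0..} e'"
    and e_int: "(\<lambda>t. t * norm (e t)) integrable_on {t0..}"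
    and e'_int: "(\<lambda>t. t * norm (e' t)) integrable_on {t0..}"
    and alpha: "\<alpha> > 3"
    and beta: "\<beta> > 0"
    and x_deriv: "\<And>t. t \<ge> t0 \<Longrightarrow> (x has_vector_derivative x' t) (at t within {t0..})"
    and x'_deriv: "\<And>t. t \<ge> t0 \<Longrightarrow> (x' has_vector_derivative x'' t) (at t within {t0..})"
    and w_deriv: "\<And>t. t \<ge> t0 \<Longrightarrow>
        ((\<lambda>s. gf (x s) + e s) has_vector_derivative w t) (at t within {t0..})"
    and ode: "\<And>t. t \<ge> t0 \<Longrightarrow>
        x'' t + (\<alpha> / t) *\<^sub>R x' t + \<beta> *\<^sub>R w t + gf (x t) + e t = 0"
begin

lemma xc: "continuous_on {t0..} x"
  by (rule continuous_on_vector_derivative) (auto intro: x_deriv)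
lemma x'c: "continuous_on {t0..} x'"
  by (rule continuous_on_vector_derivative) (auto intro: x'_deriv)
lemma ec: "continuous_on {t0..} e"
  by (rule continuous_on_vector_derivative) (auto intro: e_deriv)
lemma gxc: "continuous_on {t0..} (\<lambda>s. gf (x s))"
proof -
  have "continuous_on {t0..} (\<lambda>s. gf (x s) + e s)"
    by (rule continuous_on_vector_derivative) (auto intro: w_deriv)
  then have "continuous_on {t0..} (\<lambda>s. (gf (x s) + e s) - e s)"
    by (rule continuous_on_diff[OF _ ec])
  then show ?thesis by simp
qed
lemma fc: "continuous_on UNIV f"
  by (rule continuous_at_imp_continuous_on) (auto intro: has_derivative_continuous f_grad)
lemma fxc: "continuous_on {t0..} (\<lambda>s. f (x s))"
  by (rule continuous_on_compose2[OF fc xc]) auto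

lemma tangent: "f y \<ge> f z + gf z \<bullet> (y - z)"
  by (rule tangent_ineq[OF f_grad f_convex])

lemma fx_deriv:
  assumes "t \<ge> t0"
  shows "((\<lambda>s. f (x s)) has_vector_derivative (gf (x t) \<bullet> x' t)) (at t within {t0..})"
proof -
  have "(f has_derivative (\<lambda>h. gf (x t) \<bullet> h)) (at (x t) within x ` {t0..})"
    by (rule has_derivative_at_withinI[OF f_grad])
  from vector_derivative_diff_chain_within[OF x_deriv[OF assms] this]
  show ?thesis by (simp add: o_def)
qed

lemma e_bound: "\<exists>C. \<forall>t\<ge>t0. t * norm (e t) \<le> C"
proof -
  define g where "g s = s * norm (e s) / t0 + s * norm (e' s)" for s
  have gi: "g integrable_on {t0..}"
    unfolding g_def using e_int e'_int
    by (intro integrable_add integrable_on_divide) auto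
  have "t * norm (e t) \<le> norm (t0 *\<^sub>R e t0) + integral {t0..} g" if t: "t \<ge> t0" for t
  proof -
    have d: "((\<lambda>s. s *\<^sub>R e s) has_vector_derivative (s *\<^sub>R e' s + 1 *\<^sub>R e s)) (at s within {t0..t})"
      if "s \<in> {t0..t}" for s
      using that
      by (intro has_vector_derivative_scaleR has_vector_derivative_within_subset[OF e_deriv])
         (auto intro: DERIV_ident)
    define u where "u = t *\<^sub>R e t - t0 *\<^sub>R e t0"
    have d2: "((\<lambda>s. (s *\<^sub>R e s) \<bullet> u) has_vector_derivative ((s *\<^sub>R e' s + 1 *\<^sub>R e s) \<bullet> u)) (at s within {t0..t})"
      if "s \<in> {t0..t}" for s
      using vd_inner[OF d[OF that] has_vector_derivative_const[of u]] by simp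
    have "((\<lambda>s. (s *\<^sub>R e' s + 1 *\<^sub>R e s) \<bullet> u) has_integral ((t *\<^sub>R e t) \<bullet> u - (t0 *\<^sub>R e t0) \<bullet> u)) {t0..t}"
      by (rule fundamental_theorem_of_calculus[OF t, where f="\<lambda>s. (s *\<^sub>R e s) \<bullet> u"
          and f'="\<lambda>s. (s *\<^sub>R e' s + 1 *\<^sub>R e s) \<bullet> u"]) (rule d2)
    then have i1: "(\<lambda>s. (s *\<^sub>R e' s + 1 *\<^sub>R e s) \<bullet> u) integrable_on {t0..t}"
      and i2: "integral {t0..t} (\<lambda>s. (s *\<^sub>R e' s + 1 *\<^sub>R e s) \<bullet> u) = u \<bullet> u"
      by (auto simp: integrable_on_def integral_unique u_def inner_diff_left)
    have gsub: "g integrable_on {t0..t}" by (rule integrable_on_subinterval[OF gi]) auto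
    have "u \<bullet> u \<le> integral {t0..t} (\<lambda>s. g s * norm u)"
      unfolding i2[symmetric]
    proof (rule integral_le[OF i1])
      show "(\<lambda>s. g s * norm u) integrable_on {t0..t}" using integrable_on_mult_left[OF gsub] by simp
      fix s assume s: "s \<in> {t0..t}"
      then have s0: "s > 0" using t0_pos by auto
      have "norm (e s) \<le> s * norm (e s) / t0"
        using s t0_pos by (simp add: field_simps mult_right_mono)
      then have "norm (s *\<^sub>R e' s + 1 *\<^sub>R e s) \<le> g s"
        unfolding g_def using s0
        by (smt (verit) norm_scaleR norm_triangle_ineq scaleR_one abs_of_pos)
      then show "(s *\<^sub>R e' s + 1 *\<^sub>R e s) \<bullet> u \<le> g s * norm u"
        using norm_cauchy_schwarz[of "s *\<^sub>R e' s + 1 *\<^sub>R e s" u] mult_right_mono[of _ _ "norm u"]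
        by (meson norm_ge_zero order_trans)
    qed
    also have "\<dots> = integral {t0..t} g * norm u" by simp
    finally have "norm u * norm u \<le> integral {t0..t} g * norm u"
      by (simp add: power2_norm_eq_inner[symmetric] power2_eq_square)
    moreover have "integral {t0..t} g \<ge> 0"
      using t0_pos by (intro integral_nonneg gsub) (auto simp: g_def intro!: add_nonneg_nonneg divide_nonneg_pos)
    ultimately have "norm u \<le> integral {t0..t} g"
    proof (cases "norm u = 0")
      case False
      then have "norm u > 0" by simp
      with \<open>norm u * norm u \<le> integral {t0..t} g * norm u\<close> show ?thesis
        by (simp add: mult_le_cancel_right)
    qed simp
    then have "norm (t *\<^sub>R e t - t0 *\<^sub>R e t0) \<le> integral {t0..t} g"
      unfolding u_def .
    also have "\<dots> \<le> integral {t0..} g"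
      using t0_pos by (intro integral_subset_le integrable_on_subinterval[OF gi] gi)
        (auto simp: g_def intro!: add_nonneg_nonneg divide_nonneg_pos)
    finally have "norm (t *\<^sub>R e t - t0 *\<^sub>R e t0) \<le> integral {t0..} g" .
    moreover have "t * norm (e t) = norm (t *\<^sub>R e t)" using t t0_pos by simp
    ultimately show ?thesis by (smt (verit) norm_triangle_ineq2)
  qed
  then show ?thesis by blast
qed

end

context dyn begin

lemma v_energy_deriv:
  fixes xs :: 'a and lam :: real
  assumes t: "t \<ge> t0"
  defines "c \<equiv> \<beta> * (\<alpha> - lam)" and "\<xi> \<equiv> lam * (\<alpha> - 1 - lam)"
  defines "vv \<equiv> \<lambda>s. x' s + \<beta> *\<^sub>R (gf (x s) + e s)"
  defines "p \<equiv> \<lambda>s. x s - xs"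
  defines "q \<equiv> \<lambda>s. lam *\<^sub>R p s + s *\<^sub>R vv s"
  defines "F \<equiv> \<lambda>s. f (x s) - f xs"
  defines "E \<equiv> \<lambda>s. s * (s - c) * F s + (1/2) * (q s \<bullet> q s) + (\<xi>/2) * (p s \<bullet> p s)"
  shows "(E has_vector_derivative
     ((2*t - c) * F t - lam * (t - \<beta>) * (p t \<bullet> gf (x t)) - lam * (t - \<beta>) * (p t \<bullet> e t)
         + t * (lam + 1 - \<alpha>) * (vv t \<bullet> vv t) - t * (t - c) * \<beta> * (gf (x t) \<bullet> gf (x t))
         - t * (t - c) * (vv t \<bullet> e t) - t * (t - c) * \<beta> * (gf (x t) \<bullet> e t))) (at t within {t0..})"
proof -
  define v' where "v' = x'' t + \<beta> *\<^sub>R w t"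
  have tpos: "t > 0" using t t0_pos by simp
  have dvv: "(vv has_vector_derivative v') (at t within {t0..})"
    unfolding vv_def v'_def
    using has_vector_derivative_add[OF x'_deriv[OF t] has_vector_derivative_scaleR[OF DERIV_const w_deriv[OF t]]]
    by simp
  have dp: "(p has_vector_derivative x' t) (at t within {t0..})"
    unfolding p_def using has_vector_derivative_diff[OF x_deriv[OF t] has_vector_derivative_const[of xs]] by simp
  have dq: "(q has_vector_derivative (lam *\<^sub>R x' t + (t *\<^sub>R v' + vv t))) (at t within {t0..})"
    unfolding q_def
    using has_vector_derivative_add[OF has_vector_derivative_scaleR[OF DERIV_const dp]
        has_vector_derivative_scaleR[OF DERIV_ident dvv]] by simp
  have dF: "(F has_vector_derivative (gf (x t) \<bullet> x' t)) (at t within {t0..})"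
    unfolding F_def using has_vector_derivative_diff[OF fx_deriv[OF t] has_vector_derivative_const] by simp
  have da: "((\<lambda>s. s * (s - c)) has_vector_derivative (t * (1 - 0) + 1 * (t - c))) (at t within {t0..})"
    by (rule has_vector_derivative_mult[OF has_vector_derivative_id
          has_vector_derivative_diff[OF has_vector_derivative_id has_vector_derivative_const]])
  note dqq = vd_inner[OF dq dq]
  note dpp = vd_inner[OF dp dp]
  have dE: "(E has_vector_derivative
      (t * (t - c) * (gf (x t) \<bullet> x' t) + (t * (1 - 0) + 1 * (t - c)) * F t
       + (1/2) * (q t \<bullet> (lam *\<^sub>R x' t + (t *\<^sub>R v' + vv t)) + (lam *\<^sub>R x' t + (t *\<^sub>R v' + vv t)) \<bullet> q t)
       + (\<xi>/2) * (p t \<bullet> x' t + x' t \<bullet> p t))) (at t within {t0..})"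
    unfolding E_def
    by (intro has_vector_derivative_add has_vector_derivative_mult[OF da dF]
        has_vector_derivative_mult_right dqq dpp)
  have xX: "x' t = vv t - \<beta> *\<^sub>R (gf (x t) + e t)" by (simp add: vv_def)
  have "v' = (x'' t + (\<alpha> / t) *\<^sub>R x' t + \<beta> *\<^sub>R w t + gf (x t) + e t) - (\<alpha> / t) *\<^sub>R x' t - (gf (x t) + e t)"
    by (simp add: v'_def algebra_simps)
  also have "\<dots> = - (\<alpha> / t) *\<^sub>R x' t - (gf (x t) + e t)" using ode[OF t] by simp
  finally have vV: "v' = - (\<alpha> / t) *\<^sub>R (vv t - \<beta> *\<^sub>R (gf (x t) + e t)) - (gf (x t) + e t)"
    using xX by simp
  show ?thesis
  proof (rule has_vector_derivative_eq_rhs[OF dE])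
    have i1: "(1/2) * (q t \<bullet> (lam *\<^sub>R x' t + (t *\<^sub>R v' + vv t)) + (lam *\<^sub>R x' t + (t *\<^sub>R v' + vv t)) \<bullet> q t)
        = q t \<bullet> (lam *\<^sub>R x' t + (t *\<^sub>R v' + vv t))" by (simp add: inner_commute)
    have i2: "(\<xi>/2) * (p t \<bullet> x' t + x' t \<bullet> p t) = \<xi> * (p t \<bullet> x' t)" by (simp add: inner_commute)
    show "t * (t - c) * (gf (x t) \<bullet> x' t) + (t * (1 - 0) + 1 * (t - c)) * F t
       + (1/2) * (q t \<bullet> (lam *\<^sub>R x' t + (t *\<^sub>R v' + vv t)) + (lam *\<^sub>R x' t + (t *\<^sub>R v' + vv t)) \<bullet> q t)
       + (\<xi>/2) * (p t \<bullet> x' t + x' t \<bullet> p t) = 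
       (2*t - c) * F t - lam * (t - \<beta>) * (p t \<bullet> gf (x t)) - lam * (t - \<beta>) * (p t \<bullet> e t)
         + t * (lam + 1 - \<alpha>) * (vv t \<bullet> vv t) - t * (t - c) * \<beta> * (gf (x t) \<bullet> gf (x t))
         - t * (t - c) * (vv t \<bullet> e t) - t * (t - c) * \<beta> * (gf (x t) \<bullet> e t)"
      (is "?L = ?R")
    proof -
      have "?L = t * (t - c) * (gf (x t) \<bullet> x' t) + (2 * t - c) * F t
          + (lam *\<^sub>R p t + t *\<^sub>R vv t) \<bullet> (lam *\<^sub>R x' t + (t *\<^sub>R v' + vv t)) + \<xi> * (p t \<bullet> x' t)"
        unfolding i1 i2 by (simp add: q_def)
      also have "\<dots> = ?R"
        unfolding c_def \<xi>_def xX vV by (rule energy_alg[OF tpos])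
      finally show ?thesis .
    qed
  qed
qed

end

lemma sqrt_bound_sum:
  fixes X Q Pn E K2 lam \<xi> :: real
  assumes "Q \<ge> 0" "Pn \<ge> 0" "lam \<ge> 0" "\<xi> > 0"
    and "X \<le> Q + 2 * lam * Pn"
    and "Q\<^sup>2 / 2 \<le> E" "\<xi> / 2 * Pn\<^sup>2 \<le> E"
  shows "X \<le> sqrt (4 + 16 * lam\<^sup>2 / \<xi>) * sqrt E"
proof -
  have E0: "E \<ge> 0" using assms(6) by (smt (verit) zero_le_power2 divide_nonneg_pos)
  have "(Q + 2 * lam * Pn)\<^sup>2 \<le> 2 * Q\<^sup>2 + 8 * lam\<^sup>2 * Pn\<^sup>2"
  proof -
    have "0 \<le> (Q - 2 * lam * Pn)\<^sup>2" by simp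
    then show ?thesis by (simp add: power2_eq_square algebra_simps)
  qed
  also have "2 * Q\<^sup>2 \<le> 4 * E" using assms(6) by simp
  also have "8 * lam\<^sup>2 * Pn\<^sup>2 = (16 * lam\<^sup>2 / \<xi>) * (\<xi> / 2 * Pn\<^sup>2)" using assms(4) by (simp add: field_simps)
  also have "\<dots> \<le> (16 * lam\<^sup>2 / \<xi>) * E" using assms(4,7) by (intro mult_left_mono) auto
  finally have "(Q + 2 * lam * Pn)\<^sup>2 \<le> (4 + 16 * lam\<^sup>2 / \<xi>) * E" by (simp add: algebra_simps)
  then have "Q + 2 * lam * Pn \<le> sqrt ((4 + 16 * lam\<^sup>2 / \<xi>) * E)"
    by (rule real_le_rsqrt)
  then show ?thesis using assms(5) by (simp add: real_sqrt_mult)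
qed

context dyn begin

lemma v_energy:
  assumes xs_min: "\<forall>y. f xs \<le> f y"
  shows "\<exists>T\<ge>t0. T \<ge> 1 \<and> (\<lambda>s. s * (gf (x s) \<bullet> (x s - xs))) integrable_on {T..}
      \<and> (\<lambda>s. s * (norm (x' s + \<beta> *\<^sub>R (gf (x s) + e s)))\<^sup>2) integrable_on {T..}
      \<and> (\<lambda>s. s\<^sup>2 * (norm (gf (x s)))\<^sup>2) integrable_on {T..}"
proof -
  define lam where "lam = (\<alpha> + 1) / 2"
  define c where "c = \<beta> * (\<alpha> - lam)"
  define \<xi> where "\<xi> = lam * (\<alpha> - 1 - lam)"
  define vv where "vv = (\<lambda>s. x' s + \<beta> *\<^sub>R (gf (x s) + e s))"
  define p where "p = (\<lambda>s. x s - xs)"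
  define q where "q = (\<lambda>s. lam *\<^sub>R p s + s *\<^sub>R vv s)"
  define F where "F = (\<lambda>s. f (x s) - f xs)"
  define E where "E = (\<lambda>s. s * (s - c) * F s + (1/2) * (q s \<bullet> q s) + (\<xi>/2) * (p s \<bullet> p s))"
  define E' where "E' = (\<lambda>t. (2*t - c) * F t - lam * (t - \<beta>) * (p t \<bullet> gf (x t)) - lam * (t - \<beta>) * (p t \<bullet> e t)
         + t * (lam + 1 - \<alpha>) * (vv t \<bullet> vv t) - t * (t - c) * \<beta> * (gf (x t) \<bullet> gf (x t))
         - t * (t - c) * (vv t \<bullet> e t) - t * (t - c) * \<beta> * (gf (x t) \<bullet> e t))"
  have dE0: "(E has_vector_derivative E' t) (at t within {t0..})" if "t \<ge> t0" for t
    unfolding E_def E'_def q_def p_def vv_def F_def c_def \<xi>_def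
    by (rule v_energy_deriv[OF that])
  have lam2: "lam > 2" and lama: "\<alpha> - 1 - lam > 0" using alpha by (auto simp: lam_def)
  have xi0: "\<xi> > 0" using lam2 lama by (simp add: \<xi>_def)
  have c0: "c > 0" using beta lama by (simp add: c_def)
  obtain C where C: "\<And>t. t \<ge> t0 \<Longrightarrow> t * norm (e t) \<le> C" using e_bound by blast
  define T where "T = max t0 (max 1 (max (2*c) (2*lam*\<beta>/(lam-2))))"
  have T0: "T \<ge> t0" and T1: "T \<ge> 1" and Tc: "T \<ge> 2*c" and Tl: "T \<ge> 2*lam*\<beta>/(lam-2)"
    by (auto simp: T_def)
  have Tb: "T \<ge> \<beta>" using Tc lama beta unfolding c_def lam_def by (smt (verit) mult_le_cancel_left1)
  have dE: "(E has_vector_derivative E' t) (at t within {T..})" if "t \<ge> T" for t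
    using dE0[of t] that T0 by (auto intro: has_vector_derivative_within_subset)
  define K where "K = sqrt (4 + 16 * lam\<^sup>2 / \<xi>)"
  define P where "P = (\<lambda>t. ((lam-2)/2) * (t * (p t \<bullet> gf (x t))) + (\<alpha> - 1 - lam) * (t * (vv t \<bullet> vv t))
      + (\<beta>/4) * (t\<^sup>2 * (gf (x t) \<bullet> gf (x t))))"
  define g0 where "g0 = (\<lambda>t. (\<beta>/2) * C * (t * norm (e t)))"
  define h0 where "h0 = (\<lambda>t. K * (t * norm (e t)))"
  have Fnn: "F s \<ge> 0" for s using xs_min by (simp add: F_def)
  have Fle: "F s \<le> p s \<bullet> gf (x s)" for s
    using tangent[where y=xs and z="x s"] by (simp add: F_def p_def inner_diff_left inner_diff_right inner_commute)
  have pg: "p s \<bullet> gf (x s) \<ge> 0" for s using Fnn[of s] Fle[of s] by linarith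
  have C0: "C \<ge> 0" using C[of t0] t0_pos by (smt (verit) mult_nonneg_nonneg norm_ge_zero)
  have Enn: "E t \<ge> 0" if "t \<ge> T" for t
  proof -
    have "t * (t - c) \<ge> 0" using that Tc c0 by simp
    then have "t * (t - c) * F t \<ge> 0" using Fnn by simp
    moreover have "\<xi>/2 * (p t \<bullet> p t) \<ge> 0" using xi0 by simp
    ultimately show ?thesis unfolding E_def by simp
  qed
  have ineq: "E' t + P t \<le> g0 t + h0 t * sqrt (E t)" if t: "t \<ge> T" for t
  proof -
    define a where "a = t * (t - c)"
    define G where "G = gf (x t)"
    define ee where "ee = e t"
    define V where "V = vv t"
    define Pp where "Pp = p t"
    have tp: "t > 0" using t T1 by simp
    have a1: "a \<ge> t\<^sup>2 / 2"
    proof -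
      have "2*c \<le> t" using t Tc by simp
      then have "2*c*t \<le> t*t" using tp by (simp add: mult_right_mono)
      then show ?thesis by (simp add: a_def power2_eq_square algebra_simps)
    qed
    have a2: "a \<le> t\<^sup>2" using c0 tp by (simp add: a_def power2_eq_square algebra_simps)
    have tb: "t - \<beta> \<ge> 0" "t - \<beta> \<le> t" using t Tb beta by auto
    have te: "t * norm ee \<le> C" using C[of t] t T0 by (simp add: ee_def)
    have te0: "t * norm ee \<ge> 0" using tp by simp
    have A: "(2*t - c) * F t - lam * (t - \<beta>) * (Pp \<bullet> G) + ((lam-2)/2) * (t * (Pp \<bullet> G)) \<le> 0"
    proof -
      have "(2*t - c) * F t \<le> 2 * t * F t" using c0 Fnn[of t] by (simp add: mult_right_mono)
      also have "\<dots> \<le> 2 * t * (Pp \<bullet> G)" using Fle[of t] tp by (simp add: Pp_def G_def)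
      finally have "(2*t - c) * F t \<le> 2 * t * (Pp \<bullet> G)" .
      moreover have "2 * t - lam * (t - \<beta>) + ((lam-2)/2) * t \<le> 0"
      proof -
        have "2*lam*\<beta>/(lam-2) \<le> t" using Tl t by simp
        then have "2 * lam * \<beta> \<le> t * (lam - 2)" using lam2 by (simp add: pos_divide_le_eq)
        then have "(lam - 2) * t \<ge> 2 * lam * \<beta>" by (simp add: mult.commute)
        then show ?thesis by (simp add: field_simps)
      qed
      then have "(2 * t - lam * (t - \<beta>) + ((lam-2)/2) * t) * (Pp \<bullet> G) \<le> 0"
        using pg[of t] by (simp add: Pp_def G_def mult_nonpos_nonneg)
      ultimately show ?thesis by (simp add: algebra_simps)
    qed
    have Cc: "- a * \<beta> * (G \<bullet> G) - a * \<beta> * (G \<bullet> ee) + (\<beta>/4) * (t\<^sup>2 * (G \<bullet> G)) \<le> (\<beta>/2) * C * (t * norm ee)"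
    proof -
      have ge: "- (G \<bullet> ee) \<le> (G \<bullet> G + ee \<bullet> ee) / 2"
      proof -
        have "0 \<le> (G + ee) \<bullet> (G + ee)" by simp
        then show ?thesis by (simp add: inner_add_left inner_add_right inner_commute)
      qed
      have a0: "a * \<beta> \<ge> 0" using a1 beta by (smt (verit) zero_le_power2 mult_nonneg_nonneg divide_nonneg_pos)
      have "- a * \<beta> * (G \<bullet> ee) \<le> a * \<beta> * ((G \<bullet> G + ee \<bullet> ee) / 2)"
        using mult_left_mono[OF ge a0] by simp
      moreover have "(\<beta>/4) * (t\<^sup>2 * (G \<bullet> G)) \<le> a * \<beta> / 2 * (G \<bullet> G)"
      proof -
        have "t\<^sup>2 * (G \<bullet> G) \<le> (2 * a) * (G \<bullet> G)" using a1 by (intro mult_right_mono) auto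
        then have "(\<beta>/4) * (t\<^sup>2 * (G \<bullet> G)) \<le> (\<beta>/4) * ((2 * a) * (G \<bullet> G))"
          using beta by (intro mult_left_mono) auto
        then show ?thesis by (simp add: algebra_simps)
      qed
      moreover have "a * \<beta> / 2 * (ee \<bullet> ee) \<le> (\<beta>/2) * C * (t * norm ee)"
      proof -
        have "a * \<beta> / 2 * (ee \<bullet> ee) \<le> t\<^sup>2 * \<beta> / 2 * (ee \<bullet> ee)"
          using a2 beta by (simp add: mult_right_mono)
        also have "\<dots> = (\<beta>/2) * ((t * norm ee) * (t * norm ee))"
          by (simp add: power2_eq_square power2_norm_eq_inner[symmetric])
        also have "\<dots> \<le> (\<beta>/2) * (C * (t * norm ee))"
          using te te0 beta by (intro mult_left_mono mult_right_mono) auto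
        finally show ?thesis by simp
      qed
      ultimately show ?thesis by (simp add: algebra_simps)
    qed
    have D: "- lam * (t - \<beta>) * (Pp \<bullet> ee) - a * (V \<bullet> ee) \<le> (t * norm ee) * (lam * norm Pp + t * norm V)"
    proof -
      have "- lam * (t - \<beta>) * (Pp \<bullet> ee) \<le> lam * t * (norm Pp * norm ee)"
      proof -
        have "- (Pp \<bullet> ee) \<le> norm Pp * norm ee" using norm_cauchy_schwarz[of "-Pp" ee] by simp
        moreover have "\<bar>Pp \<bullet> ee\<bar> \<le> norm Pp * norm ee" by (rule Cauchy_Schwarz_ineq2)
        ultimately have "\<bar>- lam * (t - \<beta>) * (Pp \<bullet> ee)\<bar> \<le> lam * t * (norm Pp * norm ee)"
          using tb lam2 by (simp add: abs_mult mult_mono)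
        then show ?thesis by linarith
      qed
      moreover have "- a * (V \<bullet> ee) \<le> t * t * (norm V * norm ee)"
      proof -
        have "\<bar>V \<bullet> ee\<bar> \<le> norm V * norm ee" by (rule Cauchy_Schwarz_ineq2)
        moreover have "\<bar>a\<bar> \<le> t * t" using a1 a2 by (simp add: power2_eq_square abs_le_iff)
        ultimately have "\<bar>- a * (V \<bullet> ee)\<bar> \<le> t * t * (norm V * norm ee)"
          by (simp add: abs_mult mult_mono)
        then show ?thesis by linarith
      qed
      ultimately show ?thesis by (simp add: algebra_simps)
    qed
    have Ksq: "lam * norm Pp + t * norm V \<le> K * sqrt (E t)"
      unfolding K_def
    proof (rule sqrt_bound_sum[where Q="norm (q t)" and Pn="norm Pp"])
      show "0 \<le> norm (q t)" "0 \<le> norm Pp" "0 \<le> lam" "0 < \<xi>" using lam2 xi0 by auto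
      have "t * norm V = norm (q t - lam *\<^sub>R Pp)" using tp by (simp add: q_def Pp_def V_def)
      also have "\<dots> \<le> norm (q t) + lam * norm Pp" using lam2 by (simp add: norm_triangle_ineq4[THEN order_trans])
      finally show "lam * norm Pp + t * norm V \<le> norm (q t) + 2 * lam * norm Pp" by simp
      have aF: "t * (t - c) * F t \<ge> 0" using a1 Fnn[of t] by (simp add: a_def) (smt (verit) zero_le_power2 mult_nonneg_nonneg divide_nonneg_pos)
      have pp: "\<xi>/2 * (p t \<bullet> p t) \<ge> 0" using xi0 by simp
      show "(norm (q t))\<^sup>2 / 2 \<le> E t" using aF pp unfolding E_def by (simp add: power2_norm_eq_inner)
      show "\<xi> / 2 * (norm Pp)\<^sup>2 \<le> E t" using aF unfolding E_def Pp_def by (simp add: power2_norm_eq_inner)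
    qed
    have D2: "(t * norm ee) * (lam * norm Pp + t * norm V) \<le> (t * norm ee) * (K * sqrt (E t))"
      using Ksq te0 by (rule mult_left_mono)
    have B: "t * (lam + 1 - \<alpha>) * (V \<bullet> V) + (\<alpha> - 1 - lam) * (t * (V \<bullet> V)) = 0" by (simp add: algebra_simps)
    have "E' t + P t = ((2*t - c) * F t - lam * (t - \<beta>) * (Pp \<bullet> G) + ((lam-2)/2) * (t * (Pp \<bullet> G)))
        + (t * (lam + 1 - \<alpha>) * (V \<bullet> V) + (\<alpha> - 1 - lam) * (t * (V \<bullet> V)))
        + (- a * \<beta> * (G \<bullet> G) - a * \<beta> * (G \<bullet> ee) + (\<beta>/4) * (t\<^sup>2 * (G \<bullet> G)))
        + (- lam * (t - \<beta>) * (Pp \<bullet> ee) - a * (V \<bullet> ee))"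
      unfolding E'_def P_def a_def G_def ee_def V_def Pp_def by (simp add: algebra_simps)
    also have "\<dots> \<le> 0 + 0 + (\<beta>/2) * C * (t * norm ee) + (t * norm ee) * (K * sqrt (E t))"
      using A B Cc D D2 by linarith
    also have "\<dots> = g0 t + h0 t * sqrt (E t)" by (simp add: g0_def h0_def ee_def algebra_simps)
    finally show ?thesis .
  qed
  have sub: "{T..} \<subseteq> {t0..}" using T0 by auto
  have pc: "continuous_on {t0..} p" unfolding p_def by (intro continuous_intros xc)
  have vvc: "continuous_on {t0..} vv" unfolding vv_def by (intro continuous_intros x'c gxc ec)
  have Pc: "continuous_on {T..} P" unfolding P_def
    by (intro continuous_intros continuous_on_subset[OF pc sub] continuous_on_subset[OF vvc sub]
        continuous_on_subset[OF gxc sub])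
  have ei: "(\<lambda>t. t * norm (e t)) integrable_on {T..}"
    by (rule restrict_int[OF _ _ e_int T0]) (use t0_pos in \<open>auto intro!: continuous_intros ec\<close>)
  have eic: "continuous_on {T..} (\<lambda>t. t * norm (e t))"
    by (intro continuous_intros continuous_on_subset[OF ec sub])
  have K0: "K \<ge> 0" unfolding K_def using xi0 by simp
  have Pnn: "P t \<ge> 0" if "t \<ge> T" for t
  proof -
    have t0': "t \<ge> 0" using that T1 by simp
    show ?thesis unfolding P_def using pg[of t] lam2 lama beta t0'
      by (intro add_nonneg_nonneg mult_nonneg_nonneg) auto
  qed
  have g0c: "continuous_on {T..} g0" unfolding g0_def by (intro continuous_intros eic)
  have h0c: "continuous_on {T..} h0" unfolding h0_def by (intro continuous_intros eic)
  have g0nn: "g0 t \<ge> 0" if "t \<ge> T" for t unfolding g0_def using that T1 C0 beta by simp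
  have h0nn: "h0 t \<ge> 0" if "t \<ge> T" for t unfolding h0_def using that T1 K0 by simp
  have g0i: "g0 integrable_on {T..}" unfolding g0_def using integrable_cmul[OF ei, of "\<beta>/2*C"] by simp
  have h0i: "h0 integrable_on {T..}" unfolding h0_def using integrable_cmul[OF ei, of "K"] by simp
  obtain B where B: "\<And>t. t \<ge> T \<Longrightarrow> integral {T..t} P \<le> B"
    using energy_lemma[OF dE Enn Pc Pnn g0c g0nn g0i h0c h0nn h0i ineq] by blast
  have i1: "(\<lambda>s. s * (gf (x s) \<bullet> (x s - xs))) integrable_on {T..}"
  proof (rule dominated_int[OF _ _ _ _ Pc B])
    show "continuous_on {T..} (\<lambda>s. s * (gf (x s) \<bullet> (x s - xs)))"
      by (intro continuous_intros continuous_on_subset[OF xc sub] continuous_on_subset[OF gxc sub])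
    show "0 \<le> s * (gf (x s) \<bullet> (x s - xs))" if "s \<ge> T" for s
      using pg[of s] that T1 by (simp add: p_def inner_commute)
    show "0 \<le> 2 / (lam - 2)" using lam2 by simp
    show "s * (gf (x s) \<bullet> (x s - xs)) \<le> 2 / (lam - 2) * P s" if "s \<ge> T" for s
    proof -
      have s0: "s \<ge> 0" using that T1 by simp
      have "(\<alpha> - 1 - lam) * (s * (vv s \<bullet> vv s)) + (\<beta>/4) * (s\<^sup>2 * (gf (x s) \<bullet> gf (x s))) \<ge> 0"
        using lama beta s0 by (intro add_nonneg_nonneg mult_nonneg_nonneg) auto
      then have "((lam-2)/2) * (s * (p s \<bullet> gf (x s))) \<le> P s" unfolding P_def by simp
      then have "2 / (lam - 2) * (((lam-2)/2) * (s * (p s \<bullet> gf (x s)))) \<le> 2 / (lam - 2) * P s"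
        using lam2 by (intro mult_left_mono) auto
      then show ?thesis using lam2 by (simp add: p_def inner_commute)
    qed
  qed
  have i2: "(\<lambda>s. s * (norm (x' s + \<beta> *\<^sub>R (gf (x s) + e s)))\<^sup>2) integrable_on {T..}"
  proof (rule dominated_int[OF _ _ _ _ Pc B])
    show "continuous_on {T..} (\<lambda>s. s * (norm (x' s + \<beta> *\<^sub>R (gf (x s) + e s)))\<^sup>2)"
      by (intro continuous_intros continuous_on_subset[OF x'c sub] continuous_on_subset[OF gxc sub]
          continuous_on_subset[OF ec sub])
    show "0 \<le> s * (norm (x' s + \<beta> *\<^sub>R (gf (x s) + e s)))\<^sup>2" if "s \<ge> T" for s
      using that T1 by simp
    show "0 \<le> 1 / (\<alpha> - 1 - lam)" using lama by simp
    show "s * (norm (x' s + \<beta> *\<^sub>R (gf (x s) + e s)))\<^sup>2 \<le> 1 / (\<alpha> - 1 - lam) * P s" if "s \<ge> T" for s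
    proof -
      have s0: "s \<ge> 0" using that T1 by simp
      have "((lam-2)/2) * (s * (p s \<bullet> gf (x s))) + (\<beta>/4) * (s\<^sup>2 * (gf (x s) \<bullet> gf (x s))) \<ge> 0"
        using lam2 beta s0 pg[of s] by (intro add_nonneg_nonneg mult_nonneg_nonneg) auto
      then have "(\<alpha> - 1 - lam) * (s * (vv s \<bullet> vv s)) \<le> P s" unfolding P_def by simp
      then have "1 / (\<alpha> - 1 - lam) * ((\<alpha> - 1 - lam) * (s * (vv s \<bullet> vv s))) \<le> 1 / (\<alpha> - 1 - lam) * P s"
        using lama by (intro mult_left_mono) auto
      then show ?thesis using lama by (simp add: vv_def power2_norm_eq_inner)
    qed
  qed
  have i3: "(\<lambda>s. s\<^sup>2 * (norm (gf (x s)))\<^sup>2) integrable_on {T..}"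
  proof (rule dominated_int[OF _ _ _ _ Pc B])
    show "continuous_on {T..} (\<lambda>s. s\<^sup>2 * (norm (gf (x s)))\<^sup>2)"
      by (intro continuous_intros continuous_on_subset[OF gxc sub])
    show "0 \<le> s\<^sup>2 * (norm (gf (x s)))\<^sup>2" if "s \<ge> T" for s by simp
    show "0 \<le> 4 / \<beta>" using beta by simp
    show "s\<^sup>2 * (norm (gf (x s)))\<^sup>2 \<le> 4 / \<beta> * P s" if "s \<ge> T" for s
    proof -
      have s0: "s \<ge> 0" using that T1 by simp
      have "((lam-2)/2) * (s * (p s \<bullet> gf (x s))) + (\<alpha> - 1 - lam) * (s * (vv s \<bullet> vv s)) \<ge> 0"
        using lam2 lama s0 pg[of s] by (intro add_nonneg_nonneg mult_nonneg_nonneg) auto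
      then have "(\<beta>/4) * (s\<^sup>2 * (gf (x s) \<bullet> gf (x s))) \<le> P s" unfolding P_def by simp
      then have "4 / \<beta> * ((\<beta>/4) * (s\<^sup>2 * (gf (x s) \<bullet> gf (x s)))) \<le> 4 / \<beta> * P s"
        using beta by (intro mult_left_mono) auto
      then show ?thesis using beta by (simp add: power2_norm_eq_inner)
    qed
  qed
  show ?thesis using i1 i2 i3 T0 T1 by blast
qed

end

lemma dom_int2:
  fixes h g :: "real \<Rightarrow> real"
  assumes hc: "continuous_on {T..} h" and hnn: "\<And>t. t \<ge> T \<Longrightarrow> h t \<ge> 0"
    and le: "\<And>t. t \<ge> T \<Longrightarrow> h t \<le> g t" and gi: "g integrable_on {T..}"
  shows "h integrable_on {T..}"
proof (rule nonneg_bounded_integrable[OF hc hnn])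
  fix t assume t: "t \<ge> T"
  have sub: "{T..t} \<subseteq> {T..}" by auto
  have "integral {T..t} h \<le> integral {T..t} g"
    by (intro integral_le integrable_continuous_real continuous_on_subset[OF hc sub]
        integrable_on_subinterval[OF gi sub] le) auto
  also have "\<dots> \<le> integral {T..} g"
    by (intro integral_subset_le[OF sub] integrable_on_subinterval[OF gi sub] gi)
       (auto intro: order_trans[OF hnn le])
  finally show "integral {T..t} h \<le> integral {T..} g" .
qed

context dyn begin

lemma nb: assumes "t \<ge> t0" shows "at t within {t0..} \<noteq> bot"
  unfolding at_within_eq_bot_iff
proof -
  have "{t<..} \<subseteq> {t0..} - {t}" using assms by auto
  then have "closure {t<..} \<subseteq> closure ({t0..} - {t})" by (rule closure_mono)
  moreover have "t \<in> closure {t<..}" by simp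
  ultimately show "\<not> t \<notin> closure ({t0..} - {t})" by blast
qed

lemma W_deriv:
  fixes fs :: real
  assumes t: "t \<ge> t0"
  defines "F \<equiv> \<lambda>s. f (x s) - fs"
  defines "W \<equiv> \<lambda>s. (s * s) * F s + (1/2) * ((s * s) * (x' s \<bullet> x' s))"
  shows "(W has_vector_derivative
    (2 * t * F t + (t * t) * (gf (x t) \<bullet> x' t) + t * (x' t \<bullet> x' t) + (t * t) * (x' t \<bullet> x'' t)))
    (at t within {t0..})"
proof -
  have dF: "(F has_vector_derivative (gf (x t) \<bullet> x' t)) (at t within {t0..})"
    unfolding F_def using has_vector_derivative_diff[OF fx_deriv[OF t] has_vector_derivative_const] by simp
  have ds: "((\<lambda>s. s * s) has_vector_derivative (t * 1 + 1 * t)) (at t within {t0..})"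
    by (rule has_vector_derivative_mult[OF has_vector_derivative_id has_vector_derivative_id])
  note dxx = vd_inner[OF x'_deriv[OF t] x'_deriv[OF t]]
  have "(W has_vector_derivative
      ((t * t) * (gf (x t) \<bullet> x' t) + (t * 1 + 1 * t) * F t
      + (1/2) * ((t * t) * (x' t \<bullet> x'' t + x'' t \<bullet> x' t) + (t * 1 + 1 * t) * (x' t \<bullet> x' t))))
      (at t within {t0..})"
    unfolding W_def
    by (intro has_vector_derivative_add has_vector_derivative_mult[OF ds dF]
        has_vector_derivative_mult_right has_vector_derivative_mult[OF ds dxx])
  then show ?thesis
    by (rule has_vector_derivative_eq_rhs) (simp add: inner_commute algebra_simps)
qed

end

context dyn begin

lemma W_part:
  assumes min0: "\<forall>y. f xs0 \<le> f y"
    and R3: "(\<lambda>t. t * (f (x t) - f xs0)) integrable_on {t0..}"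
    and R5: "(\<lambda>t. t * (norm (x' t))\<^sup>2) integrable_on {t0..}"
  shows "((\<lambda>t. t\<^sup>2 * (f (x t) - f xs0)) \<longlongrightarrow> 0) at_top \<and> ((\<lambda>t. t * norm (x' t)) \<longlongrightarrow> 0) at_top"
proof -
  define F where "F = (\<lambda>s. f (x s) - f xs0)"
  define W where "W = (\<lambda>s. (s * s) * F s + (1/2) * ((s * s) * (x' s \<bullet> x' s)))"
  define W' where "W' = (\<lambda>t. 2 * t * F t + (t * t) * (gf (x t) \<bullet> x' t) + t * (x' t \<bullet> x' t) + (t * t) * (x' t \<bullet> x'' t))"
  have dW: "(W has_vector_derivative W' t) (at t within {t0..})" if "t \<ge> t0" for t
    unfolding W_def W'_def F_def by (rule W_deriv[OF that])
  have Fnn: "F s \<ge> 0" for s using min0 by (simp add: F_def)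
  have Wnn: "W s \<ge> 0" for s unfolding W_def using Fnn by simp
  have sqW: "(t * norm (x' t))\<^sup>2 \<le> 2 * W t" for t
  proof -
    have e: "(t * norm (x' t))\<^sup>2 = t * t * (x' t \<bullet> x' t)"
      by (simp add: dot_square_norm power_mult_distrib power2_eq_square)
    have "t * t * F t \<ge> 0" using Fnn[of t] by simp
    then show ?thesis unfolding e W_def by simp
  qed
  have txW: "t * norm (x' t) \<le> sqrt 2 * sqrt (W t)" if "t \<ge> t0" for t
  proof -
    have "(t * norm (x' t))\<^sup>2 \<le> 2 * W t" by (rule sqW)
    then have "t * norm (x' t) \<le> sqrt (2 * W t)" by (rule real_le_rsqrt)
    then show ?thesis by (simp add: real_sqrt_mult)
  qed
  define g1 where "g1 = (\<lambda>t. 2 * (t * F t))"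
  define h1 where "h1 = (\<lambda>t. sqrt 2 * (\<beta> * (t * norm (e' t)) + t * norm (e t)))"
  have Wle: "W' t \<le> g1 t + h1 t * sqrt (W t)" if t: "t \<ge> t0" for t
  proof -
    have tp: "t > 0" using t t0_pos by simp
    define d where "d = w t - e' t"
    have dg: "((\<lambda>s. gf (x s)) has_vector_derivative d) (at t within {t0..})"
      unfolding d_def using has_vector_derivative_diff[OF w_deriv[OF t] e_deriv[OF t]] by simp
    have mono: "x' t \<bullet> d \<ge> 0"
      by (rule deriv_monotone[OF x_deriv[OF t] dg nb[OF t]]) (rule grad_monotone[OF f_grad f_convex])
    have "x'' t = (x'' t + (\<alpha> / t) *\<^sub>R x' t + \<beta> *\<^sub>R w t + gf (x t) + e t) - (\<alpha> / t) *\<^sub>R x' t - \<beta> *\<^sub>R w t - gf (x t) - e t"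
      by (simp add: algebra_simps)
    also have "\<dots> = - (\<alpha> / t) *\<^sub>R x' t - \<beta> *\<^sub>R (d + e' t) - gf (x t) - e t" using ode[OF t] by (simp add: d_def)
    finally have x2: "x'' t = - (\<alpha> / t) *\<^sub>R x' t - \<beta> *\<^sub>R (d + e' t) - gf (x t) - e t" .
    have "W' t = 2 * t * F t + (1 - \<alpha>) * t * (x' t \<bullet> x' t) - \<beta> * (t * t) * (x' t \<bullet> d)
        - \<beta> * (t * t) * (x' t \<bullet> e' t) - (t * t) * (x' t \<bullet> e t)"
      unfolding W'_def x2 using tp
      by (simp add: inner_add_right inner_diff_right inner_commute algebra_simps)
    also have "\<dots> \<le> 2 * t * F t + (t * norm (x' t)) * (\<beta> * (t * norm (e' t)) + t * norm (e t))"
    proof -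
      have a: "(1 - \<alpha>) * t * (x' t \<bullet> x' t) \<le> 0" using alpha tp
        by (intro mult_nonpos_nonneg) auto
      have b: "- \<beta> * (t * t) * (x' t \<bullet> d) \<le> 0" using beta mono by (simp add: mult_nonneg_nonneg)
      have c: "- \<beta> * (t * t) * (x' t \<bullet> e' t) \<le> \<beta> * (t * t) * (norm (x' t) * norm (e' t))"
      proof -
        have "- (x' t \<bullet> e' t) \<le> norm (x' t) * norm (e' t)"
          using norm_cauchy_schwarz[of "- x' t" "e' t"] by simp
        then have "(\<beta> * (t * t)) * (- (x' t \<bullet> e' t)) \<le> (\<beta> * (t * t)) * (norm (x' t) * norm (e' t))"
          using beta by (intro mult_left_mono) auto
        then show ?thesis by simp
      qed
      have dd: "- (t * t) * (x' t \<bullet> e t) \<le> (t * t) * (norm (x' t) * norm (e t))"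
      proof -
        have "- (x' t \<bullet> e t) \<le> norm (x' t) * norm (e t)"
          using norm_cauchy_schwarz[of "- x' t" "e t"] by simp
        then have "(t * t) * (- (x' t \<bullet> e t)) \<le> (t * t) * (norm (x' t) * norm (e t))"
          by (intro mult_left_mono) auto
        then show ?thesis by simp
      qed
      show ?thesis using a b c dd by (simp add: algebra_simps)
    qed
    also have "\<dots> \<le> 2 * t * F t + (sqrt 2 * sqrt (W t)) * (\<beta> * (t * norm (e' t)) + t * norm (e t))"
      using txW[OF t] beta tp by (intro add_left_mono mult_right_mono) auto
    also have "\<dots> = g1 t + h1 t * sqrt (W t)" by (simp add: g1_def h1_def algebra_simps)
    finally show ?thesis .
  qed
  have g1c: "continuous_on {t0..} g1" unfolding g1_def F_def by (intro continuous_intros fxc)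
  have h1c: "continuous_on {t0..} h1" unfolding h1_def by (intro continuous_intros ec e'_cont)
  have g1nn: "g1 t \<ge> 0" if "t \<ge> t0" for t using that t0_pos Fnn[of t] by (simp add: g1_def)
  have h1nn: "h1 t \<ge> 0" if "t \<ge> t0" for t using that t0_pos beta by (simp add: h1_def)
  have g1i: "g1 integrable_on {t0..}" unfolding g1_def F_def using integrable_cmul[OF R3, of 2] by simp
  have h1i: "h1 integrable_on {t0..}" unfolding h1_def
    using integrable_cmul[OF integrable_add[OF integrable_cmul[OF e'_int, of \<beta>] e_int], of "sqrt 2"] by simp
  have P0c: "continuous_on {t0..} (\<lambda>_. 0::real)" by simp
  have P0nn: "(\<lambda>_. 0::real) t \<ge> 0" if "t \<ge> t0" for t by simp
  have ineq0: "W' t + (\<lambda>_. 0::real) t \<le> g1 t + h1 t * sqrt (W t)" if "t \<ge> t0" for t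
    using Wle[OF that] by simp
  have EL: "(\<exists>M. \<forall>t\<ge>t0. W t \<le> M) \<and> (\<exists>B. \<forall>t\<ge>t0. integral {t0..t} (\<lambda>_. 0::real) \<le> B)"
    by (rule energy_lemma[OF dW Wnn P0c P0nn g1c g1nn g1i h1c h1nn h1i ineq0])
  then obtain M where M: "\<And>t. t \<ge> t0 \<Longrightarrow> W t \<le> M" by blast
  have M0: "M \<ge> 0" using M[of t0] Wnn[of t0] by simp
  define k where "k = (\<lambda>t. g1 t + h1 t * sqrt M)"
  have kc: "continuous_on {t0..} k" unfolding k_def by (intro continuous_intros g1c h1c)
  have knn: "k t \<ge> 0" if "t \<ge> t0" for t using g1nn[OF that] h1nn[OF that] M0 by (simp add: k_def)
  have ki: "k integrable_on {t0..}" unfolding k_def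
    using integrable_add[OF g1i integrable_cmul[OF h1i, of "sqrt M"]] by (simp add: mult.commute)
  have W'k: "W' t \<le> k t" if "t \<ge> t0" for t
  proof -
    have "sqrt (W t) \<le> sqrt M" using M[OF that] by simp
    then have "h1 t * sqrt (W t) \<le> h1 t * sqrt M" using h1nn[OF that] by (rule mult_left_mono)
    then show ?thesis using Wle[OF that] by (simp add: k_def)
  qed
  have Wle2: "W t \<le> W s + integral {s..t} k" if "t0 \<le> s" "s \<le> t" for s t
    by (rule FTC_le[OF dW W'k kc that])
  have Wc: "continuous_on {t0..} W" by (rule continuous_on_vector_derivative) (auto intro: dW)
  have Wi: "(\<lambda>s. W s / s) integrable_on {t0..}"
  proof (rule integrable_eq)
    show "(\<lambda>t. t * (f (x t) - f xs0) + (1/2) * (t * (norm (x' t))\<^sup>2)) integrable_on {t0..}"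
      using integrable_add[OF R3 integrable_cmul[OF R5, of "1/2"]] by simp
    fix s assume "s \<in> {t0..}"
    then have "s > 0" using t0_pos by simp
    then show "s * (f (x s) - f xs0) + (1/2) * (s * (norm (x' s))\<^sup>2) = W s / s"
      unfolding W_def F_def by (simp add: power2_norm_eq_inner field_simps)
  qed
  have ev: "eventually (\<lambda>t. W t < \<epsilon>) at_top" if "\<epsilon> > 0" for \<epsilon>
    by (rule vanish_lemma[OF t0_pos _ kc knn ki _ Wc Wi that]) (auto intro: Wle2 Wnn)
  have lim1: "((\<lambda>t. t\<^sup>2 * (f (x t) - f xs0)) \<longlongrightarrow> 0) at_top"
  proof (rule tendstoI)
    fix \<epsilon> :: real assume "\<epsilon> > 0"
    with ev have "eventually (\<lambda>t. W t < \<epsilon>) at_top" by blast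
    then show "eventually (\<lambda>t. dist (t\<^sup>2 * (f (x t) - f xs0)) 0 < \<epsilon>) at_top"
    proof (rule eventually_mono)
      fix t assume "W t < \<epsilon>"
      moreover have "t\<^sup>2 * (f (x t) - f xs0) \<le> W t"
        unfolding W_def F_def by (simp add: power2_eq_square)
      moreover have "t\<^sup>2 * (f (x t) - f xs0) \<ge> 0" using min0 by simp
      ultimately show "dist (t\<^sup>2 * (f (x t) - f xs0)) 0 < \<epsilon>" by simp
    qed
  qed
  have lim2: "((\<lambda>t. t * norm (x' t)) \<longlongrightarrow> 0) at_top"
  proof (rule tendstoI)
    fix \<epsilon> :: real assume ep: "\<epsilon> > 0"
    then have "\<epsilon>\<^sup>2 / 2 > 0" by simp
    then have "eventually (\<lambda>t. W t < \<epsilon>\<^sup>2 / 2) at_top" by (rule ev)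
    moreover have "eventually (\<lambda>t. t \<ge> t0) at_top" by (rule eventually_ge_at_top)
    ultimately show "eventually (\<lambda>t. dist (t * norm (x' t)) 0 < \<epsilon>) at_top"
    proof (rule eventually_elim2)
      fix t assume W: "W t < \<epsilon>\<^sup>2 / 2" and t: "t \<ge> t0"
      then have tp: "t > 0" using t0_pos by simp
      have "(t * norm (x' t))\<^sup>2 \<le> 2 * W t" by (rule sqW)
      also have "\<dots> < \<epsilon>\<^sup>2" using W by simp
      finally have "(t * norm (x' t))\<^sup>2 < \<epsilon>\<^sup>2" .
      then have "t * norm (x' t) < \<epsilon>" using ep by (simp add: power_less_imp_less_base)
      then show "dist (t * norm (x' t)) 0 < \<epsilon>" using tp by simp
    qed
  qed
  show ?thesis using lim1 lim2 by blast
qed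

end

context dyn begin

lemma main_result:
  assumes argmin_ne: "\<exists>z. \<forall>y. f z \<le> f y"
  shows "((\<lambda>t. t\<^sup>2 * (f (x t) - (INF y. f y))) \<longlongrightarrow> 0) at_top
      \<and> (\<lambda>t. t\<^sup>2 * (norm (gf (x t)))\<^sup>2) integrable_on {t0..}
      \<and> (\<lambda>t. t * (f (x t) - (INF y. f y))) integrable_on {t0..}
      \<and> (\<forall>xs. (\<forall>y. f xs \<le> f y) \<longrightarrow>
           (\<lambda>t. t * (gf (x t) \<bullet> (x t - xs))) integrable_on {t0..})
      \<and> (\<lambda>t. t * (norm (x' t))\<^sup>2) integrable_on {t0..}
      \<and> ((\<lambda>t. t * norm (x' t)) \<longlongrightarrow> 0) at_top"
proof -
  obtain xs0 where min0: "\<forall>y. f xs0 \<le> f y" using argmin_ne by blast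
  have INF: "(INF y. f y) = f xs0" by (rule cInf_eq_minimum) (use min0 in auto)
  obtain C where C: "\<And>t. t \<ge> t0 \<Longrightarrow> t * norm (e t) \<le> C" using e_bound by blast
  from v_energy[OF min0] obtain T where TT: "T \<ge> t0 \<and> T \<ge> 1 \<and> (\<lambda>s. s * (gf (x s) \<bullet> (x s - xs0))) integrable_on {T..}
      \<and> (\<lambda>s. s * (norm (x' s + \<beta> *\<^sub>R (gf (x s) + e s)))\<^sup>2) integrable_on {T..}
      \<and> (\<lambda>s. s\<^sup>2 * (norm (gf (x s)))\<^sup>2) integrable_on {T..}" ..
  from TT have T0: "T \<ge> t0" and T1: "T \<ge> 1"
    and i1: "(\<lambda>s. s * (gf (x s) \<bullet> (x s - xs0))) integrable_on {T..}"
    and i2: "(\<lambda>s. s * (norm (x' s + \<beta> *\<^sub>R (gf (x s) + e s)))\<^sup>2) integrable_on {T..}"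
    and i3: "(\<lambda>s. s\<^sup>2 * (norm (gf (x s)))\<^sup>2) integrable_on {T..}"
    by (simp_all only:)
  have sub: "{T..} \<subseteq> {t0..}" using T0 by auto
  have R2: "(\<lambda>t. t\<^sup>2 * (norm (gf (x t)))\<^sup>2) integrable_on {t0..}"
    by (rule ext_int[OF _ i3 T0]) (intro continuous_intros gxc)
  have R4: "\<forall>xs. (\<forall>y. f xs \<le> f y) \<longrightarrow> (\<lambda>t. t * (gf (x t) \<bullet> (x t - xs))) integrable_on {t0..}"
  proof (intro allI impI)
    fix xs assume "\<forall>y. f xs \<le> f y"
    from v_energy[OF this] obtain T' where TT': "T' \<ge> t0 \<and> T' \<ge> 1 \<and> (\<lambda>s. s * (gf (x s) \<bullet> (x s - xs))) integrable_on {T'..}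
      \<and> (\<lambda>s. s * (norm (x' s + \<beta> *\<^sub>R (gf (x s) + e s)))\<^sup>2) integrable_on {T'..}
      \<and> (\<lambda>s. s\<^sup>2 * (norm (gf (x s)))\<^sup>2) integrable_on {T'..}" ..
    from TT' have a: "T' \<ge> t0" and b: "(\<lambda>s. s * (gf (x s) \<bullet> (x s - xs))) integrable_on {T'..}"
      by (simp_all only:)
    show "(\<lambda>t. t * (gf (x t) \<bullet> (x t - xs))) integrable_on {t0..}"
      by (rule ext_int[OF _ b a]) (intro continuous_intros gxc xc)
  qed
  have R3': "(\<lambda>t. t * (f (x t) - f xs0)) integrable_on {t0..}"
  proof (rule ext_int[OF _ _ T0])
    show "continuous_on {t0..} (\<lambda>t. t * (f (x t) - f xs0))" by (intro continuous_intros fxc)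
    show "(\<lambda>t. t * (f (x t) - f xs0)) integrable_on {T..}"
    proof (rule dom_int2[OF _ _ _ i1])
      show "continuous_on {T..} (\<lambda>t. t * (f (x t) - f xs0))"
        by (intro continuous_intros continuous_on_subset[OF fxc sub])
      show "0 \<le> t * (f (x t) - f xs0)" if "t \<ge> T" for t using that T1 min0 by simp
      show "t * (f (x t) - f xs0) \<le> t * (gf (x t) \<bullet> (x t - xs0))" if "t \<ge> T" for t
      proof -
        have "f (x t) - f xs0 \<le> gf (x t) \<bullet> (x t - xs0)"
          using tangent[where y=xs0 and z="x t"] by (simp add: inner_diff_right)
        then show ?thesis using that T1 by (simp add: mult_left_mono)
      qed
    qed
  qed
  then have R3: "(\<lambda>t. t * (f (x t) - (INF y. f y))) integrable_on {t0..}" unfolding INF .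
  have ei: "(\<lambda>t. t * norm (e t)) integrable_on {T..}"
    by (rule restrict_int[OF _ _ e_int T0]) (use t0_pos in \<open>auto intro!: continuous_intros ec\<close>)
  have C0: "C \<ge> 0" using C[of t0] t0_pos by (smt (verit) mult_nonneg_nonneg norm_ge_zero)
  have R5: "(\<lambda>t. t * (norm (x' t))\<^sup>2) integrable_on {t0..}"
  proof (rule ext_int[OF _ _ T0])
    show "continuous_on {t0..} (\<lambda>t. t * (norm (x' t))\<^sup>2)" by (intro continuous_intros x'c)
    define ub where "ub = (\<lambda>s. 3 * (s * (norm (x' s + \<beta> *\<^sub>R (gf (x s) + e s)))\<^sup>2)
        + (3 * \<beta>\<^sup>2) * (s\<^sup>2 * (norm (gf (x s)))\<^sup>2) + (3 * \<beta>\<^sup>2 * (C / t0)) * (s * norm (e s)))"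
    have ubi: "ub integrable_on {T..}" unfolding ub_def
      by (intro integrable_add integrable_on_cmult_left[OF i2, simplified]
          integrable_on_cmult_left[OF i3, simplified] integrable_on_cmult_left[OF ei, simplified])
    show "(\<lambda>t. t * (norm (x' t))\<^sup>2) integrable_on {T..}"
    proof (rule dom_int2[OF _ _ _ ubi])
      show "continuous_on {T..} (\<lambda>t. t * (norm (x' t))\<^sup>2)"
        by (intro continuous_intros continuous_on_subset[OF x'c sub])
      show "0 \<le> t * (norm (x' t))\<^sup>2" if "t \<ge> T" for t using that T1 by simp
      show "t * (norm (x' t))\<^sup>2 \<le> ub t" if t: "t \<ge> T" for t
      proof -
        have tp: "t \<ge> 1" using t T1 by simp
        have "x' t = (x' t + \<beta> *\<^sub>R (gf (x t) + e t)) + (- \<beta> *\<^sub>R gf (x t)) + (- \<beta> *\<^sub>R e t)"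
          by (simp add: algebra_simps)
        then have "(norm (x' t))\<^sup>2 \<le> 3 * ((norm (x' t + \<beta> *\<^sub>R (gf (x t) + e t)))\<^sup>2
            + (norm (- \<beta> *\<^sub>R gf (x t)))\<^sup>2 + (norm (- \<beta> *\<^sub>R e t))\<^sup>2)"
          by (metis norm_sq3)
        also have "\<dots> = 3 * ((norm (x' t + \<beta> *\<^sub>R (gf (x t) + e t)))\<^sup>2
            + \<beta>\<^sup>2 * (norm (gf (x t)))\<^sup>2 + \<beta>\<^sup>2 * (norm (e t))\<^sup>2)"
          by (simp add: power_mult_distrib)
        finally have n3: "(norm (x' t))\<^sup>2 \<le> \<dots>" .
        have g1: "t * (norm (gf (x t)))\<^sup>2 \<le> t\<^sup>2 * (norm (gf (x t)))\<^sup>2"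
          using tp by (intro mult_right_mono) (auto simp: power2_eq_square)
        have e1: "norm (e t) \<le> C / t0"
        proof -
          have "t0 * norm (e t) \<le> t * norm (e t)" using t T0 by (intro mult_right_mono) auto
          also have "\<dots> \<le> C" using C[of t] t T0 by simp
          finally show ?thesis using t0_pos by (simp add: field_simps)
        qed
        have e2: "t * (norm (e t))\<^sup>2 \<le> (C / t0) * (t * norm (e t))"
        proof -
          have "t * (norm (e t))\<^sup>2 = (t * norm (e t)) * norm (e t)" by (simp add: power2_eq_square)
          also have "\<dots> \<le> (t * norm (e t)) * (C / t0)" using e1 tp by (intro mult_left_mono) auto
          finally show ?thesis by (simp add: ac_simps)
        qed
        have "t * (norm (x' t))\<^sup>2 \<le> t * (3 * ((norm (x' t + \<beta> *\<^sub>R (gf (x t) + e t)))\<^sup>2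
            + \<beta>\<^sup>2 * (norm (gf (x t)))\<^sup>2 + \<beta>\<^sup>2 * (norm (e t))\<^sup>2))"
          using n3 tp by (intro mult_left_mono) auto
        also have "\<dots> = 3 * (t * (norm (x' t + \<beta> *\<^sub>R (gf (x t) + e t)))\<^sup>2)
            + (3 * \<beta>\<^sup>2) * (t * (norm (gf (x t)))\<^sup>2) + (3 * \<beta>\<^sup>2) * (t * (norm (e t))\<^sup>2)"
          by (simp add: algebra_simps)
        also have "\<dots> \<le> ub t"
        proof -
          have "(3 * \<beta>\<^sup>2) * (t * (norm (gf (x t)))\<^sup>2) \<le> (3 * \<beta>\<^sup>2) * (t\<^sup>2 * (norm (gf (x t)))\<^sup>2)"
            using g1 by (intro mult_left_mono) auto
          moreover have "(3 * \<beta>\<^sup>2) * (t * (norm (e t))\<^sup>2) \<le> (3 * \<beta>\<^sup>2) * ((C / t0) * (t * norm (e t)))"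
            using e2 by (intro mult_left_mono) auto
          ultimately show ?thesis unfolding ub_def by (simp add: mult.assoc)
        qed
        finally show ?thesis .
      qed
    qed
  qed
  note W = W_part[OF min0 R3' R5]
  show ?thesis unfolding INF
    apply (intro conjI)
         apply (rule conjunct1[OF W])
        apply (rule R2)
       apply (rule R3')
      apply (rule R4)
     apply (rule R5)
    apply (rule conjunct2[OF W])
    done
qed

end

theorem theorem5:
  fixes f :: "'a::{real_inner, complete_space} \<Rightarrow> real"
    and gf :: "'a \<Rightarrow> 'a"
    and D2f :: "'a \<Rightarrow> 'a \<Rightarrow>\<^sub>L 'a"
    and e e' :: "real \<Rightarrow> 'a"
    and x x' x'' w :: "real \<Rightarrow> 'a"
    and t0 \<alpha> \<beta> :: real
  assumes t0_pos: "t0 > 0"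
    and f_grad: "\<And>y. (f has_derivative (\<lambda>h. gf y \<bullet> h)) (at y)"
    and gf_deriv: "\<And>y. (gf has_derivative blinfun_apply (D2f y)) (at y)"
    and D2f_cont: "continuous_on UNIV D2f"
    and f_convex: "convex_on UNIV f"
    and argmin_ne: "\<exists>z. \<forall>y. f z \<le> f y"
    and e_deriv: "\<And>t. t \<ge> t0 \<Longrightarrow> (e has_vector_derivative e' t) (at t within {t0..})"
    and e'_cont: "continuous_on {t0..} e'"
    and e_int: "(\<lambda>t. t * norm (e t)) integrable_on {t0..}"
    and e'_int: "(\<lambda>t. t * norm (e' t)) integrable_on {t0..}"
    and alpha: "\<alpha> > 3"
    and beta: "\<beta> > 0"
    and x_deriv: "\<And>t. t \<ge> t0 \<Longrightarrow> (x has_vector_derivative x' t) (at t within {t0..})"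
    and x'_deriv: "\<And>t. t \<ge> t0 \<Longrightarrow> (x' has_vector_derivative x'' t) (at t within {t0..})"
    and w_deriv: "\<And>t. t \<ge> t0 \<Longrightarrow>
        ((\<lambda>s. gf (x s) + e s) has_vector_derivative w t) (at t within {t0..})"
    and ode: "\<And>t. t \<ge> t0 \<Longrightarrow>
        x'' t + (\<alpha> / t) *\<^sub>R x' t + \<beta> *\<^sub>R w t + gf (x t) + e t = 0"
  shows "((\<lambda>t. t\<^sup>2 * (f (x t) - (INF y. f y))) \<longlongrightarrow> 0) at_top
      \<and> (\<lambda>t. t\<^sup>2 * (norm (gf (x t)))\<^sup>2) integrable_on {t0..}
      \<and> (\<lambda>t. t * (f (x t) - (INF y. f y))) integrable_on {t0..}
      \<and> (\<forall>xs. (\<forall>y. f xs \<le> f y) \<longrightarrow>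
           (\<lambda>t. t * (gf (x t) \<bullet> (x t - xs))) integrable_on {t0..})
      \<and> (\<lambda>t. t * (norm (x' t))\<^sup>2) integrable_on {t0..}
      \<and> ((\<lambda>t. t * norm (x' t)) \<longlongrightarrow> 0) at_top"
  proof -
  interpret dyn f gf e e' x x' x'' w t0 \<alpha> \<beta>
    by (rule dyn.intro[OF t0_pos f_grad f_convex e_deriv e'_cont e_int e'_int alpha beta
          x_deriv x'_deriv w_deriv ode])
  show ?thesis by (rule main_result[OF argmin_ne])
qed

end
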